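(* In the setting where SA 1 contracts with ESC $B$ and SA 2 with ESC $A$ ($W>L>0$, $\Lambda,v>0$, $0<q_B<q_A\le1$, $\alpha\in[0,1)$), if $\frac{W-L}{L}\ge\frac{q_B\alpha^2+q_B\alpha-2q_A\alpha^2}{2q_A(1-\alpha)^2}$ and the equilibrium has $\lambda_1+\lambda_2<\Lambda$, then the unique second-stage pricing equilibrium is $$p_1=\frac{v\Big(\frac{2q_Bq_A\alpha^2-q_Bq_A\alpha^3-q_B^2\alpha^2}{W-L}+\frac{(1-\alpha)^2(2-\alpha)q_Aq_B}{L}\Big)}{4q_A\big[\frac{\alpha^2}{W-L}+\frac{(1-\alpha)^2}{L}\big]-\frac{q_B\alpha^2}{W-L}},\qquad p_2=\frac{v\Big(\frac{2q_A^2\alpha^2-q_Aq_B\alpha^2-q_Aq_B\alpha}{W-L}+\frac{2q_A^2(1-\alpha)^2}{L}\Big)}{4q_A\big[\frac{\alpha^2}{W-L}+\frac{(1-\alpha)^2}{L}\big]-\frac{q_B\alpha^2}{W-L}}.$$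
   Context: Expected subscriber payoffs: SA 1 (ESC $B$): $q_Bv-q_B\alpha\frac{\alpha\lambda_1+\lambda_2}{W-L}-q_B\frac{(1-\alpha)^2\lambda_1}{L}-p_1$; SA 2 (ESC $A$): $q_Av-q_B\frac{\alpha\lambda_1}{W-L}-q_A\frac{\lambda_2}{W-L}-p_2$. Third stage: Wardrop equilibrium ($\lambda_i\ge0$, $\lambda_1+\lambda_2\le\Lambda$; if $\lambda_i>0$ SA $i$'s subscriber payoff is nonnegative and at least the other's; if $\lambda_1+\lambda_2<\Lambda$ the largest payoff is $0$). Second stage: Nash equilibrium in prices $p_i\ge0$, SA $i$ maximizing $p_i\lambda_i$. *)

theory Defs
  imports Complex_Main
begin

definition payoff1 :: "real \<Rightarrow> real \<Rightarrow> real \<Rightarrow> real \<Rightarrow> real \<Rightarrow> real \<Rightarrow> real \<Rightarrow> real \<Rightarrow> real \<Rightarrow> real" where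
  "payoff1 v qA qB \<alpha> W L l1 l2 p1 =
     qB * v - qB * \<alpha> * ((\<alpha> * l1 + l2) / (W - L)) - qB * ((1 - \<alpha>)^2 * l1 / L) - p1"

definition payoff2 :: "real \<Rightarrow> real \<Rightarrow> real \<Rightarrow> real \<Rightarrow> real \<Rightarrow> real \<Rightarrow> real \<Rightarrow> real \<Rightarrow> real \<Rightarrow> real" where
  "payoff2 v qA qB \<alpha> W L l1 l2 p2 =
     qA * v - qB * (\<alpha> * l1 / (W - L)) - qA * (l2 / (W - L)) - p2"

definition wardrop :: "real \<Rightarrow> real \<Rightarrow> real \<Rightarrow> real \<Rightarrow> real \<Rightarrow> real \<Rightarrow> real \<Rightarrow> real \<Rightarrow> real \<Rightarrow> real \<Rightarrow> real \<Rightarrow> bool" where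
  "wardrop v qA qB \<alpha> W L \<Lambda> p1 p2 l1 l2 \<longleftrightarrow>
     (let U1 = payoff1 v qA qB \<alpha> W L l1 l2 p1; U2 = payoff2 v qA qB \<alpha> W L l1 l2 p2 in
       l1 \<ge> 0 \<and> l2 \<ge> 0 \<and> l1 + l2 \<le> \<Lambda> \<and>
       (l1 > 0 \<longrightarrow> U1 \<ge> 0 \<and> U1 \<ge> U2) \<and>
       (l2 > 0 \<longrightarrow> U2 \<ge> 0 \<and> U2 \<ge> U1) \<and>
       (l1 + l2 < \<Lambda> \<longrightarrow> max U1 U2 = 0))"

definition price_eq :: "real \<Rightarrow> real \<Rightarrow> real \<Rightarrow> real \<Rightarrow> real \<Rightarrow> real \<Rightarrow> real \<Rightarrow> real \<Rightarrow> real \<Rightarrow> real \<Rightarrow> real \<Rightarrow> bool" where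
  "price_eq v qA qB \<alpha> W L \<Lambda> p1 p2 l1 l2 \<longleftrightarrow>
     p1 \<ge> 0 \<and> p2 \<ge> 0 \<and> wardrop v qA qB \<alpha> W L \<Lambda> p1 p2 l1 l2 \<and>
     (\<forall>p1' m1 m2. p1' \<ge> 0 \<longrightarrow> wardrop v qA qB \<alpha> W L \<Lambda> p1' p2 m1 m2 \<longrightarrow> p1' * m1 \<le> p1 * l1) \<and>
     (\<forall>p2' m1 m2. p2' \<ge> 0 \<longrightarrow> wardrop v qA qB \<alpha> W L \<Lambda> p1 p2' m1 m2 \<longrightarrow> p2' * m2 \<le> p2 * l2)"

end

theory Submission
  imports Defs
begin


lemma G_up:
  fixes \<Delta> d e p l :: real
  assumes "\<Delta> > 0" "d > 0" "e > 0"
    and H: "\<forall>s. 0 < s \<and> s \<le> e \<longrightarrow> (p + \<Delta>*s)*(l - d*s) \<le> p*l"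
  shows "\<Delta>*l \<le> d*p"
proof (rule ccontr)
  assume nt: "\<not> ?thesis"
  define A where "A = \<Delta>*l - d*p"
  have A: "A > 0" using nt by (simp add: A_def)
  define s where "s = min e (A/(2*\<Delta>*d))"
  have s0: "s > 0" using A assms by (simp add: s_def)
  have se: "s \<le> e" by (simp add: s_def)
  have "s \<le> A/(2*\<Delta>*d)" by (simp add: s_def)
  hence sb: "\<Delta>*d*s \<le> A/2" using assms by (simp add: field_simps)
  have eq: "(p + \<Delta>*s)*(l - d*s) - p*l = s*(A - \<Delta>*d*s)" by (simp add: A_def algebra_simps)
  have "s*(A - \<Delta>*d*s) \<ge> s*(A/2)" using sb s0 by (intro mult_left_mono) auto
  moreover have "s*(A/2) > 0" using s0 A by simp
  ultimately have "(p + \<Delta>*s)*(l - d*s) > p*l" using eq by linarith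
  with H s0 se show False by auto
qed

lemma G_down:
  fixes \<Delta> d e p l :: real
  assumes "\<Delta> > 0" "d > 0" "e > 0" "l \<ge> 0"
    and H: "\<forall>s. -e \<le> s \<and> s < 0 \<and> 0 \<le> p + \<Delta>*s \<longrightarrow> (p + \<Delta>*s)*(l - d*s) \<le> p*l"
  shows "d*p \<le> \<Delta>*l"
proof (rule ccontr)
  assume nt: "\<not> ?thesis"
  define A where "A = d*p - \<Delta>*l"
  have A: "A > 0" using nt by (simp add: A_def)
  have "d*p > 0" using A assms(1,4) unfolding A_def by (smt (verit) mult_nonneg_nonneg)
  hence p0: "p > 0" using assms(2) by (simp add: zero_less_mult_iff)
  define t where "t = min e (min (p/\<Delta>) (A/(2*\<Delta>*d)))"
  have t0: "t > 0" using A assms p0 by (simp add: t_def)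
  have te: "t \<le> e" by (simp add: t_def)
  have "t \<le> p/\<Delta>" by (simp add: t_def)
  hence tp: "0 \<le> p + \<Delta>*(-t)" using assms by (simp add: field_simps)
  have "t \<le> A/(2*\<Delta>*d)" by (simp add: t_def)
  hence sb: "\<Delta>*d*t \<le> A/2" using assms by (simp add: field_simps)
  have eq: "(p + \<Delta>*(-t))*(l - d*(-t)) - p*l = t*(A - \<Delta>*d*t)" by (simp add: A_def algebra_simps)
  have "t*(A - \<Delta>*d*t) \<ge> t*(A/2)" using sb t0 by (intro mult_left_mono) auto
  moreover have "t*(A/2) > 0" using t0 A by simp
  ultimately have "(p + \<Delta>*(-t))*(l - d*(-t)) > p*l" using eq by linarith
  moreover have "-e \<le> -t \<and> -t < 0 \<and> 0 \<le> p + \<Delta>*(-t)" using t0 te tp by auto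
  ultimately show False using H by fastforce
qed

lemma wardrop_int:
  "0 \<le> m1 \<Longrightarrow> 0 \<le> m2 \<Longrightarrow> m1 + m2 < \<Lambda> \<Longrightarrow> payoff1 v qA qB a W L m1 m2 p1 = 0
   \<Longrightarrow> payoff2 v qA qB a W L m1 m2 p2 = 0 \<Longrightarrow> wardrop v qA qB a W L \<Lambda> p1 p2 m1 m2"
  by (simp add: wardrop_def Let_def)

lemma wardrop_bd:
  "0 < m1 \<Longrightarrow> m1 < \<Lambda> \<Longrightarrow> payoff1 v qA qB a W L m1 0 p1 = 0
   \<Longrightarrow> payoff2 v qA qB a W L m1 0 p2 \<le> 0 \<Longrightarrow> wardrop v qA qB a W L \<Lambda> p1 p2 m1 0"
  by (simp add: wardrop_def Let_def max_def)



theorem lemma6: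
  fixes v qA qB \<alpha> W L \<Lambda> p1 p2 l1 l2 :: real
  assumes "W > L" and "L > 0" and "\<Lambda> > 0" and "v > 0"
    and "0 < qB" and "qB < qA" and "qA \<le> 1"
    and "0 \<le> \<alpha>" and "\<alpha> < 1"
    and "(W - L) / L \<ge> (qB * \<alpha>^2 + qB * \<alpha> - 2 * qA * \<alpha>^2) / (2 * qA * (1 - \<alpha>)^2)"
    and "price_eq v qA qB \<alpha> W L \<Lambda> p1 p2 l1 l2"
    and "l1 + l2 < \<Lambda>"
  shows "p1 = v * ((2 * qB * qA * \<alpha>^2 - qB * qA * \<alpha>^3 - qB^2 * \<alpha>^2) / (W - L)
                   + (1 - \<alpha>)^2 * (2 - \<alpha>) * qA * qB / L)
              / (4 * qA * (\<alpha>^2 / (W - L) + (1 - \<alpha>)^2 / L) - qB * \<alpha>^2 / (W - L))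
       \<and> p2 = v * ((2 * qA^2 * \<alpha>^2 - qA * qB * \<alpha>^2 - qA * qB * \<alpha>) / (W - L)
                   + 2 * qA^2 * (1 - \<alpha>)^2 / L)
              / (4 * qA * (\<alpha>^2 / (W - L) + (1 - \<alpha>)^2 / L) - qB * \<alpha>^2 / (W - L))"
proof -
  define D where "D = W - L"
  have D0: "D > 0" using assms(1) by (simp add: D_def)
  have L0: "L > 0" by fact
  define c1 where "c1 = qB*(\<alpha>^2/D + (1-\<alpha>)^2/L)"
  define b where "b = qB*\<alpha>/D"
  define d where "d = qA/D"
  define \<Delta> where "\<Delta> = c1*d - b^2"
  have P1: "\<And>m1 m2 p. payoff1 v qA qB \<alpha> W L m1 m2 p = qB*v - c1*m1 - b*m2 - p"
    using D0 L0 by (simp add: payoff1_def c1_def b_def D_def[symmetric] field_simps power2_eq_square)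
  have P2: "\<And>m1 m2 p. payoff2 v qA qB \<alpha> W L m1 m2 p = qA*v - b*m1 - d*m2 - p"
    using D0 L0 by (simp add: payoff2_def b_def d_def D_def[symmetric] field_simps)
  have c1p: "c1 > 0" using assms(5,9) D0 L0 unfolding c1_def
    by (intro mult_pos_pos add_nonneg_pos) auto
  have b0: "b \<ge> 0" using assms(5,8) D0 by (simp add: b_def)
  have d0: "d > 0" using assms(5,6) D0 by (simp add: d_def)
  have \<Delta>eq: "\<Delta> = qB*\<alpha>^2*(qA-qB)/D^2 + qB*qA*(1-\<alpha>)^2/(L*D)"
    using D0 L0 by (simp add: \<Delta>_def c1_def b_def d_def field_simps power2_eq_square)
  have \<Delta>0: "\<Delta> > 0" unfolding \<Delta>eq using assms(5,6,9) D0 L0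
    by (intro add_nonneg_pos) auto
  have X: "qB * \<alpha>^2 + qB * \<alpha> - 2 * qA * \<alpha>^2 \<le> D/L * (2 * qA * (1 - \<alpha>)^2)"
    using assms(10) assms(5,6,9) by (simp add: D_def pos_divide_le_eq)
  have Hid: "2*qA*c1 - qB*b*(1+\<alpha>) = qB/D * (D/L * (2 * qA * (1 - \<alpha>)^2) - (qB * \<alpha>^2 + qB * \<alpha> - 2 * qA * \<alpha>^2))"
    using D0 L0 by (simp add: c1_def b_def field_simps power2_eq_square)
  have H: "qB*b*(1+\<alpha>) \<le> 2*qA*c1"
  proof -
    have "qB/D * (D/L * (2 * qA * (1 - \<alpha>)^2) - (qB * \<alpha>^2 + qB * \<alpha> - 2 * qA * \<alpha>^2)) \<ge> 0"
      using X D0 assms(5) by simp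
    thus ?thesis using Hid by linarith
  qed
  have Hs: "b*qB < 2*qA*c1"
  proof (cases "\<alpha> = 0")
    case True thus ?thesis using c1p assms(5,6) by (simp add: b_def)
  next
    case False
    hence "b > 0" using assms(5,8) D0 by (simp add: b_def)
    hence "qB*b*\<alpha> > 0" using False assms(5,8) by simp
    thus ?thesis using H by (simp add: algebra_simps)
  qed
  have bqA: "b*qA = \<alpha>*qB*d" by (simp add: b_def d_def)
  from assms(11) have p10: "p1 \<ge> 0" and p20: "p2 \<ge> 0"
    and W0: "wardrop v qA qB \<alpha> W L \<Lambda> p1 p2 l1 l2"
    and dev1: "\<forall>p1' m1 m2. p1' \<ge> 0 \<longrightarrow> wardrop v qA qB \<alpha> W L \<Lambda> p1' p2 m1 m2 \<longrightarrow> p1' * m1 \<le> p1 * l1"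
    and dev2: "\<forall>p2' m1 m2. p2' \<ge> 0 \<longrightarrow> wardrop v qA qB \<alpha> W L \<Lambda> p1 p2' m1 m2 \<longrightarrow> p2' * m2 \<le> p2 * l2"
    unfolding price_eq_def by auto
  define U1 where "U1 = qB*v - c1*l1 - b*l2 - p1"
  define U2 where "U2 = qA*v - b*l1 - d*l2 - p2"
  have l1n: "l1 \<ge> 0" and l2n: "l2 \<ge> 0" and C1: "l1>0 \<longrightarrow> U1 \<ge> 0 \<and> U1 \<ge> U2"
    and C2: "l2>0 \<longrightarrow> U2 \<ge> 0 \<and> U2 \<ge> U1" and Mx: "max U1 U2 = 0"
    using W0 assms(12) unfolding wardrop_def Let_def P1 P2 U1_def[symmetric] U2_def[symmetric] by auto
  have U1le: "U1 \<le> 0" and U2le: "U2 \<le> 0" using Mx by (auto simp: max_def split: if_splits)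
  define \<sigma> where "\<sigma> = \<Lambda> - l1 - l2"
  have \<sigma>0: "\<sigma> > 0" using assms(12) by (simp add: \<sigma>_def)
  have l1p: "l1 > 0"
  proof (rule ccontr)
    assume "\<not> l1 > 0"
    hence l10: "l1 = 0" using l1n by simp
    have rev0: "\<And>p m1 m2. p \<ge> 0 \<Longrightarrow> wardrop v qA qB \<alpha> W L \<Lambda> p p2 m1 m2 \<Longrightarrow> p*m1 \<le> 0"
      using dev1 l10 by auto
    show False
    proof (cases "l2 > 0")
      case True
      hence U20: "U2 = 0" using C2 U2le by auto
      hence "d*l2 \<le> qA*v" using p20 l10 by (simp add: U2_def)
      hence "qA*(b*l2) \<le> qA*(\<alpha>*qB*v)" using bqA
        by (smt (verit, ccfv_SIG) assms(5,8) mult.assoc mult.commute mult_left_mono zero_le_mult_iff)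
      hence bl2: "b*l2 \<le> \<alpha>*qB*v" using assms(5,6) by simp
      define K1 where "K1 = qB*v - b*l2"
      have "\<alpha>*qB*v < qB*v" using assms(4,5,9) by simp
      hence K1p: "K1 > 0" using bl2 by (simp add: K1_def)
      define t where "t = min (l2/(b+1)) (min (\<sigma>/(d+1)) (K1/(2*\<Delta>)))"
      have t0: "t > 0" using True b0 d0 \<sigma>0 K1p \<Delta>0 by (simp add: t_def)
      have "t \<le> l2/(b+1)" by (simp add: t_def)
      hence t1: "(b+1)*t \<le> l2" using b0 by (simp add: pos_le_divide_eq mult.commute)
      have "t \<le> \<sigma>/(d+1)" by (simp add: t_def)
      hence t2: "(d+1)*t \<le> \<sigma>" using d0 by (simp add: pos_le_divide_eq mult.commute)
      have "t \<le> K1/(2*\<Delta>)" by (simp add: t_def)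
      hence t3: "2*\<Delta>*t \<le> K1" using \<Delta>0 by (simp add: pos_le_divide_eq mult.commute)
      have bt: "b*t \<ge> 0" using b0 t0 by simp
      have "wardrop v qA qB \<alpha> W L \<Lambda> (K1 - \<Delta>*t) p2 (d*t) (l2 - b*t)"
      proof (rule wardrop_int)
        show "0 \<le> d*t" using d0 t0 by simp
        show "0 \<le> l2 - b*t" using t1 t0 by (simp add: algebra_simps)
        show "d*t + (l2 - b*t) < \<Lambda>" using t2 t0 bt \<sigma>_def l10 by (simp add: algebra_simps)
        show "payoff1 v qA qB \<alpha> W L (d*t) (l2 - b*t) (K1 - \<Delta>*t) = 0"
          by (simp add: P1 K1_def \<Delta>_def algebra_simps power2_eq_square)
        show "payoff2 v qA qB \<alpha> W L (d*t) (l2 - b*t) p2 = 0"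
          using U20 l10 by (simp add: P2 U2_def algebra_simps)
      qed
      moreover have "K1 - \<Delta>*t > 0" using t3 mult_pos_pos[OF \<Delta>0 t0] K1p by linarith
      ultimately have "(K1 - \<Delta>*t)*(d*t) \<le> 0" using rev0 by auto
      moreover have "(K1 - \<Delta>*t)*(d*t) > 0" using \<open>K1 - \<Delta>*t > 0\<close> d0 t0 by simp
      ultimately show False by linarith
    next
      case False
      hence l20: "l2 = 0" using l2n by simp
      have "qA*v - p2 \<le> 0" using U2le l10 l20 by (simp add: U2_def)
      define t where "t = min (\<Lambda>/2) (qB*v/(2*c1))"
      have t0: "t > 0" using assms(3,4,5) c1p by (simp add: t_def)
      have "t \<le> qB*v/(2*c1)" by (simp add: t_def)
      hence t3: "2*c1*t \<le> qB*v" using c1p by (simp add: pos_le_divide_eq mult.commute)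
      have "wardrop v qA qB \<alpha> W L \<Lambda> (qB*v - c1*t) p2 t 0"
      proof (rule wardrop_bd)
        show "0 < t" by fact
        show "t < \<Lambda>" using t0 assms(3) by (simp add: t_def)
        show "payoff1 v qA qB \<alpha> W L t 0 (qB*v - c1*t) = 0" by (simp add: P1)
        show "payoff2 v qA qB \<alpha> W L t 0 p2 \<le> 0" unfolding P2 using \<open>qA*v - p2 \<le> 0\<close> mult_nonneg_nonneg[of b t] b0 t0
          by linarith
      qed
      moreover have "qB*v - c1*t > 0" using t3 mult_pos_pos[OF c1p t0] mult_pos_pos[OF assms(5,4)] by linarith
      ultimately have "(qB*v - c1*t)*t \<le> 0" using rev0 by auto
      moreover have "(qB*v - c1*t)*t > 0" using \<open>qB*v - c1*t > 0\<close> t0 by simp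
      ultimately show False by linarith
    qed
  qed
  have U10: "U1 = 0" using C1 l1p U1le by auto
  have eqs: "U1 = 0 \<and> U2 = 0 \<and> \<Delta>*l1 = d*p1 \<and> \<Delta>*l2 = c1*p2"
  proof (cases "l2 > 0")
    case True
    have U20: "U2 = 0" using C2 True U2le by auto
    define m where "m = min l1 (min l2 \<sigma>)"
    have m0: "m > 0" using l1p True \<sigma>0 by (simp add: m_def)
    have ml: "m \<le> l1" "m \<le> l2" "m \<le> \<sigma>" by (auto simp: m_def)
    define e where "e = m/(d+b+c1+1)"
    have e0: "e > 0" using m0 d0 b0 c1p by (simp add: e_def)
    have "d+b+c1+1 \<noteq> 0" using d0 b0 c1p by linarith
    hence "(d+b+c1+1)*e = m" by (simp add: e_def)
    hence em: "d*e + b*e + c1*e + e = m" by (simp add: algebra_simps)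
    have kb: "\<And>k s. k \<ge> 0 \<Longrightarrow> -e \<le> s \<Longrightarrow> s \<le> e \<Longrightarrow> k*s \<le> k*e \<and> -(k*e) \<le> k*s"
    proof -
      fix k s :: real assume "k \<ge> 0" "-e \<le> s" "s \<le> e"
      thus "k*s \<le> k*e \<and> -(k*e) \<le> k*s"
        using mult_left_mono[of s e k] mult_left_mono[of "-e" s k] by simp
    qed
    have de: "d*e \<ge> 0" "b*e \<ge> 0" "c1*e \<ge> 0" using d0 b0 c1p e0 by auto
    have dv1: "\<And>s. -e \<le> s \<Longrightarrow> s \<le> e \<Longrightarrow> 0 \<le> p1 + \<Delta>*s \<Longrightarrow> (p1+\<Delta>*s)*(l1-d*s) \<le> p1*l1"
    proof -
      fix s assume s: "-e \<le> s" "s \<le> e" "0 \<le> p1 + \<Delta>*s"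
      have B: "d*s \<le> d*e \<and> -(d*e) \<le> d*s" "b*s \<le> b*e \<and> -(b*e) \<le> b*s"
        using kb[OF _ s(1,2)] d0 b0 by auto
      have "wardrop v qA qB \<alpha> W L \<Lambda> (p1+\<Delta>*s) p2 (l1 - d*s) (l2 + b*s)"
      proof (rule wardrop_int)
        show "0 \<le> l1 - d*s" using B ml em de e0 by linarith
        show "0 \<le> l2 + b*s" using B ml em de e0 by linarith
        show "l1 - d*s + (l2 + b*s) < \<Lambda>" using B ml em de e0 \<sigma>_def by linarith
        show "payoff1 v qA qB \<alpha> W L (l1 - d*s) (l2 + b*s) (p1+\<Delta>*s) = 0"
          using U10 by (simp add: P1 U1_def \<Delta>_def algebra_simps power2_eq_square)
        show "payoff2 v qA qB \<alpha> W L (l1 - d*s) (l2 + b*s) p2 = 0"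
          using U20 by (simp add: P2 U2_def algebra_simps)
      qed
      thus "(p1+\<Delta>*s)*(l1-d*s) \<le> p1*l1" using dev1 s(3) by auto
    qed
    have dv2: "\<And>s. -e \<le> s \<Longrightarrow> s \<le> e \<Longrightarrow> 0 \<le> p2 + \<Delta>*s \<Longrightarrow> (p2+\<Delta>*s)*(l2-c1*s) \<le> p2*l2"
    proof -
      fix s assume s: "-e \<le> s" "s \<le> e" "0 \<le> p2 + \<Delta>*s"
      have B: "c1*s \<le> c1*e \<and> -(c1*e) \<le> c1*s" "b*s \<le> b*e \<and> -(b*e) \<le> b*s"
        using kb[OF _ s(1,2)] c1p b0 by auto
      have "wardrop v qA qB \<alpha> W L \<Lambda> p1 (p2+\<Delta>*s) (l1 + b*s) (l2 - c1*s)"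
      proof (rule wardrop_int)
        show "0 \<le> l1 + b*s" using B ml em de e0 by linarith
        show "0 \<le> l2 - c1*s" using B ml em de e0 by linarith
        show "l1 + b*s + (l2 - c1*s) < \<Lambda>" using B ml em de e0 \<sigma>_def by linarith
        show "payoff1 v qA qB \<alpha> W L (l1 + b*s) (l2 - c1*s) p1 = 0"
          using U10 by (simp add: P1 U1_def algebra_simps)
        show "payoff2 v qA qB \<alpha> W L (l1 + b*s) (l2 - c1*s) (p2+\<Delta>*s) = 0"
          using U20 by (simp add: P2 U2_def \<Delta>_def algebra_simps power2_eq_square)
      qed
      thus "(p2+\<Delta>*s)*(l2-c1*s) \<le> p2*l2" using dev2 s(3) by auto
    qed
    have "\<Delta>*l1 \<le> d*p1"
      by (rule G_up[OF \<Delta>0 d0 e0]) (use dv1 p10 \<Delta>0 in \<open>auto intro!: dv1\<close>)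
    moreover have "d*p1 \<le> \<Delta>*l1"
      by (rule G_down[OF \<Delta>0 d0 e0 l1n]) (auto intro!: dv1)
    moreover have "\<Delta>*l2 \<le> c1*p2"
      by (rule G_up[OF \<Delta>0 c1p e0]) (use dv2 p20 \<Delta>0 in \<open>auto intro!: dv2\<close>)
    moreover have "c1*p2 \<le> \<Delta>*l2"
      by (rule G_down[OF \<Delta>0 c1p e0 l2n]) (auto intro!: dv2)
    ultimately show ?thesis using U10 U20 by auto
  next
    case False
    hence l20: "l2 = 0" using l2n by simp
    define K where "K = qA*v - b*l1"
    have U2K: "U2 = K - p2" by (simp add: U2_def K_def l20)
    have U1e: "p1 = qB*v - c1*l1" using U10 l20 by (simp add: U1_def)
    have Kn: "\<not> K > 0"
    proof
      assume Kp: "K > 0"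
      define t where "t = min (l1/(b+1)) (min (\<sigma>/(c1+1)) (K/(2*\<Delta>)))"
      have t0: "t > 0" using l1p b0 c1p \<sigma>0 Kp \<Delta>0 by (simp add: t_def)
      have "t \<le> l1/(b+1)" by (simp add: t_def)
      hence t1: "(b+1)*t \<le> l1" using b0 by (simp add: pos_le_divide_eq mult.commute)
      have "t \<le> \<sigma>/(c1+1)" by (simp add: t_def)
      hence t2: "(c1+1)*t \<le> \<sigma>" using c1p by (simp add: pos_le_divide_eq mult.commute)
      have "t \<le> K/(2*\<Delta>)" by (simp add: t_def)
      hence t3: "2*\<Delta>*t \<le> K" using \<Delta>0 by (simp add: pos_le_divide_eq mult.commute)
      have bt: "b*t \<ge> 0" using b0 t0 by simp
      have "wardrop v qA qB \<alpha> W L \<Lambda> p1 (K - \<Delta>*t) (l1 - b*t) (c1*t)"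
      proof (rule wardrop_int)
        show "0 \<le> l1 - b*t" using t1 t0 by (simp add: algebra_simps)
        show "0 \<le> c1*t" using c1p t0 by simp
        show "l1 - b*t + c1*t < \<Lambda>" using t2 t0 bt \<sigma>_def l20 by (simp add: algebra_simps)
        show "payoff1 v qA qB \<alpha> W L (l1 - b*t) (c1*t) p1 = 0"
          using U1e by (simp add: P1 algebra_simps)
        show "payoff2 v qA qB \<alpha> W L (l1 - b*t) (c1*t) (K - \<Delta>*t) = 0"
          by (simp add: P2 K_def \<Delta>_def algebra_simps power2_eq_square)
      qed
      moreover have "K - \<Delta>*t > 0" using t3 mult_pos_pos[OF \<Delta>0 t0] Kp by linarith
      ultimately have "(K - \<Delta>*t)*(c1*t) \<le> p2*l2" using dev2 by auto
      moreover have "(K - \<Delta>*t)*(c1*t) > 0" using \<open>K - \<Delta>*t > 0\<close> c1p t0 by simp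
      ultimately show False using l20 by simp
    qed
    have U20: "U2 = 0"
    proof (rule ccontr)
      assume "U2 \<noteq> 0"
      hence U2n: "U2 < 0" using U2le by simp
      define e where "e = min (l1/2) (min (\<sigma>/2) ((p2 - K)/(2*b+1)))"
      have e0: "e > 0" using l1p \<sigma>0 U2n U2K b0 by (simp add: e_def)
      have e1: "e \<le> l1/2" "e \<le> \<sigma>/2" unfolding e_def by linarith+
      have "e \<le> (p2 - K)/(2*b+1)" by (simp add: e_def)
      hence e3: "(2*b+1)*e \<le> p2 - K" using b0 by (simp add: pos_le_divide_eq mult.commute)
      have be: "b*e \<ge> 0" using b0 e0 by simp
      have dv: "\<And>s. -e \<le> s \<Longrightarrow> s \<le> e \<Longrightarrow> 0 \<le> p1 + c1*s \<Longrightarrow> (p1+c1*s)*(l1-1*s) \<le> p1*l1"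
      proof -
        fix s assume s: "-e \<le> s" "s \<le> e" "0 \<le> p1 + c1*s"
        have B: "b*s \<le> b*e" using mult_left_mono[OF s(2) b0] .
        have "wardrop v qA qB \<alpha> W L \<Lambda> (p1 + c1*s) p2 (l1 - s) 0"
        proof (rule wardrop_bd)
          show "0 < l1 - s" using s e1 l1p by linarith
          show "l1 - s < \<Lambda>" using s e1 \<sigma>0 \<sigma>_def l20 by linarith
          show "payoff1 v qA qB \<alpha> W L (l1 - s) 0 (p1 + c1*s) = 0"
            using U1e by (simp add: P1 algebra_simps)
          show "payoff2 v qA qB \<alpha> W L (l1 - s) 0 p2 \<le> 0"
            using B e3 be e0 by (simp add: P2 K_def algebra_simps)
        qed
        thus "(p1+c1*s)*(l1-1*s) \<le> p1*l1" using dev1 s(3) by auto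
      qed
      have one: "(1::real) > 0" by simp
      have "c1*l1 \<le> 1*p1"
        by (rule G_up[OF c1p one e0]) (use dv p10 c1p in \<open>auto\<close>)
      moreover have "1*p1 \<le> c1*l1"
        by (rule G_down[OF c1p one e0 l1n]) (use dv in \<open>auto\<close>)
      ultimately have "qB*v = 2*c1*l1" using U1e by simp
      hence "2*c1*K = v*(2*qA*c1 - b*qB)" by (simp add: K_def algebra_simps)
      moreover have "v*(2*qA*c1 - b*qB) > 0" using Hs assms(4) by simp
      ultimately have "(2*c1)*K > 0" by simp
      hence "K > 0" using c1p by (simp add: zero_less_mult_iff)
      thus False using Kn by simp
    qed
    have p2z: "p2 = 0" and K0: "K = 0" using U20 U2K p20 Kn by auto
    have bl1: "b*l1 = qA*v" using K0 by (simp add: K_def)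
    have bp: "b > 0" using bl1 b0 assms(4,5,6) l1p
      by (metis less_eq_real_def mult_pos_pos mult_zero_left order_less_trans)
    define e where "e = min (l1/(d+1)) (\<sigma>/(b+1))"
    have e0: "e > 0" using l1p \<sigma>0 b0 d0 by (simp add: e_def)
    have "e \<le> l1/(d+1)" by (simp add: e_def)
    hence e1: "(d+1)*e \<le> l1" using d0 by (simp add: pos_le_divide_eq mult.commute)
    have "e \<le> \<sigma>/(b+1)" by (simp add: e_def)
    hence e2: "(b+1)*e \<le> \<sigma>" using b0 by (simp add: pos_le_divide_eq mult.commute)
    have dv: "\<And>s. 0 < s \<and> s \<le> e \<longrightarrow> (p1+\<Delta>*s)*(l1-d*s) \<le> p1*l1"
    proof
      fix s assume s: "0 < s \<and> s \<le> e"
      have B: "d*s \<le> d*e" "b*s \<le> b*e" using mult_left_mono[of s e] s d0 b0 by auto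
      have "wardrop v qA qB \<alpha> W L \<Lambda> (p1+\<Delta>*s) p2 (l1 - d*s) (b*s)"
      proof (rule wardrop_int)
        show "0 \<le> l1 - d*s" using B e1 e0 by (simp add: algebra_simps)
        show "0 \<le> b*s" using b0 s by simp
        have "d*s > 0" using d0 s by simp
        then show "l1 - d*s + b*s < \<Lambda>" using B e2 s \<sigma>_def l20 e0
          by (simp add: algebra_simps)
        show "payoff1 v qA qB \<alpha> W L (l1 - d*s) (b*s) (p1+\<Delta>*s) = 0"
          using U1e by (simp add: P1 \<Delta>_def algebra_simps power2_eq_square)
        show "payoff2 v qA qB \<alpha> W L (l1 - d*s) (b*s) p2 = 0"
          using bl1 p2z by (simp add: P2 algebra_simps)
      qed
      moreover have "p1 + \<Delta>*s \<ge> 0" using p10 \<Delta>0 s by simp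
      ultimately show "(p1+\<Delta>*s)*(l1-d*s) \<le> p1*l1" using dev1 by auto
    qed
    have A1: "\<Delta>*l1 \<le> d*p1" by (rule G_up[OF \<Delta>0 d0 e0]) (use dv in blast)
    have "b*(d*p1 - \<Delta>*l1) = b*d*qB*v - 2*c1*d*(b*l1) + b*b*(b*l1)"
      by (simp add: U1e \<Delta>_def algebra_simps power2_eq_square)
    also have "\<dots> = b*d*qB*v - 2*c1*d*(qA*v) + b*(b*qA)*v" using bl1 by (simp add: algebra_simps)
    also have "\<dots> = v*d*(qB*b*(1+\<alpha>) - 2*qA*c1)" using bqA by (simp add: algebra_simps)
    finally have "b*(d*p1 - \<Delta>*l1) \<le> 0" using H assms(4) d0
      by (simp add: mult_nonneg_nonpos)
    hence "d*p1 - \<Delta>*l1 \<le> 0" using bp by (simp add: mult_le_0_iff)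
    hence "\<Delta>*l1 = d*p1" using A1 by simp
    thus ?thesis using U10 U20 l20 p2z by simp
  qed
  have E1: "U1 = 0" and E2: "U2 = 0" and A1: "\<Delta>*l1 = d*p1" and A2: "\<Delta>*l2 = c1*p2" using eqs by auto
  have "d*U1 - b*U2 = d*qB*v - b*qA*v - \<Delta>*l1 - d*p1 + b*p2"
    by (simp add: U1_def U2_def \<Delta>_def algebra_simps power2_eq_square)
  hence F1: "2*d*p1 - b*p2 = v*(d*qB - b*qA)" using E1 E2 A1 by (simp add: algebra_simps)
  have "c1*U2 - b*U1 = c1*qA*v - b*qB*v - \<Delta>*l2 - c1*p2 + b*p1"
    by (simp add: U1_def U2_def \<Delta>_def algebra_simps power2_eq_square)
  hence F2: "2*c1*p2 - b*p1 = v*(c1*qA - b*qB)" using E1 E2 A2 by (simp add: algebra_simps)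
  have G1: "p1*(4*d*c1 - b^2) = (2*c1)*(2*d*p1 - b*p2) + b*(2*c1*p2 - b*p1)"
    by (simp add: algebra_simps power2_eq_square)
  have G2: "p2*(4*d*c1 - b^2) = (2*d)*(2*c1*p2 - b*p1) + b*(2*d*p1 - b*p2)"
    by (simp add: algebra_simps power2_eq_square)
  define den where "den = 4 * qA * (\<alpha>^2 / D + (1 - \<alpha>)^2 / L) - qB * \<alpha>^2 / D"
  define N1 where "N1 = v * ((2 * qB * qA * \<alpha>^2 - qB * qA * \<alpha>^3 - qB^2 * \<alpha>^2) / D
                   + (1 - \<alpha>)^2 * (2 - \<alpha>) * qA * qB / L)"
  define N2 where "N2 = v * ((2 * qA^2 * \<alpha>^2 - qA * qB * \<alpha>^2 - qA * qB * \<alpha>) / D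
                   + 2 * qA^2 * (1 - \<alpha>)^2 / L)"
  have dd: "4*d*c1 - b^2 = qB/D * den"
    using D0 L0 by (simp add: den_def c1_def b_def d_def field_simps power2_eq_square)
  have n1: "(2*c1)*(v*(d*qB - b*qA)) + b*(v*(c1*qA - b*qB)) = qB/D * N1"
    using D0 L0 by (simp add: N1_def c1_def b_def d_def field_simps power2_eq_square power3_eq_cube)
  have n2: "(2*d)*(v*(c1*qA - b*qB)) + b*(v*(d*qB - b*qA)) = qB/D * N2"
    using D0 L0 by (simp add: N2_def c1_def b_def d_def field_simps power2_eq_square power3_eq_cube)
  have cd: "c1*d > 0" using c1p d0 by simp
  have "4*d*c1 - b^2 > 0" using \<Delta>0 cd unfolding \<Delta>_def by (simp add: algebra_simps)
  hence "qB/D * den > 0" using dd by simp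
  moreover have "qB/D > 0" using D0 assms(5) by simp
  ultimately have denp: "den > 0" by (metis zero_less_mult_pos)
  have q: "qB/D \<noteq> 0" using D0 assms(5) by simp
  have "qB/D * (p1*den) = p1*(4*d*c1 - b^2)" using dd by simp
  also have "\<dots> = (2*c1)*(v*(d*qB - b*qA)) + b*(v*(c1*qA - b*qB))" using G1 F1 F2 by simp
  finally have "qB/D * (p1*den) = qB/D * N1" using n1 by simp
  hence "p1*den = N1" using q by simp
  hence r1: "p1 = N1/den" using denp by (simp add: field_simps)
  have "qB/D * (p2*den) = p2*(4*d*c1 - b^2)" using dd by simp
  also have "\<dots> = (2*d)*(v*(c1*qA - b*qB)) + b*(v*(d*qB - b*qA))" using G2 F1 F2 by simp
  finally have "qB/D * (p2*den) = qB/D * N2" using n2 by simp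
  hence "p2*den = N2" using q by simp
  hence r2: "p2 = N2/den" using denp by (simp add: field_simps)
  show ?thesis unfolding D_def[symmetric] using r1 r2 by (simp add: N1_def N2_def den_def)
qed

end
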